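(* Let $\mu>0$, $\sigma\ge0$. Then the robust approximation ratio satisfies \[\mathrm{APX}(\mu,\sigma)\ \ge\ \sup_{(\Theta,F)\in\Delta_{\mu,\sigma}}\frac{\mathbb{E}_{\theta\sim\Theta}[\mathrm{OPT}(F_\theta)]}{\mathrm{OPT}\left(\mathbb{E}_{\theta\sim\Theta}[F_\theta]\right)}.\]
   Context: A nonnegative real random variable is $(\mu,\sigma)$-distributed if its expectation is $\mu$ and its standard deviation is at most $\sigma$; $\mathbb{F}_{\mu,\sigma}$ is the class of such distributions (identified with their cdfs). For a distribution $F$ of a nonnegative $X$ and price $p\ge 0$, $\mathrm{REV}(p;F)=p\Pr[X\ge p]$; for a distribution $A$ over prices, $\mathrm{REV}(A;F)=\mathbb{E}_{p\sim A}[\mathrm{REV}(p;F)]$; $\mathrm{OPT}(F)=\sup_{p\ge0}\mathrm{REV}(p;F)$; $\mathrm{APX}(\mu,\sigma)=\inf_A\sup_{F\in\mathbb{F}_{\mu,\sigma}}\mathrm{OPT}(F)/\mathrm{REV}(A;F)$, the infimum over all distributions $A$ over nonnegative prices (ratios with zero denominator are $+\infty$). A $(\mu,\sigma)$ mixture is a pair $(\Theta,F)$, where $\Theta$ is a probability measure on a measurable space $T$ and $F:\mathbb{R}_{\ge0}\times T\to\mathbb{R}$ is measurable such that each $F_\theta(x)=F(x;\theta)$ is the cdf of a distribution in $\mathbb{F}_{\mu,\sigma}$; $\Delta_{\mu,\sigma}$ is the class of all $(\mu,\sigma)$ mixtures. The posterior distribution $\mathbb{E}_{\theta\sim\Theta}[F_\theta]$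 is the distribution with cdf $z\mapsto\mathbb{E}_{\theta\sim\Theta}[F_\theta(z)]$. *)

theory Defs
  imports "HOL-Probability.Probability"
begin

definition nonneg_dist :: "real measure \<Rightarrow> bool" where
  "nonneg_dist M \<longleftrightarrow> real_distribution M \<and> (AE x in M. 0 \<le> x)"

definition Fclass :: "real \<Rightarrow> real \<Rightarrow> real measure set" where
  "Fclass \<mu> \<sigma> = {M. nonneg_dist M \<and> integrable M (\<lambda>x. x) \<and> integrable M (\<lambda>x. x ^ 2)
      \<and> (\<integral>x. x \<partial>M) = \<mu> \<and> sqrt (\<integral>x. (x - \<mu>) ^ 2 \<partial>M) \<le> \<sigma>}"

definition rev_price :: "real \<Rightarrow> real measure \<Rightarrow> real" where
  "rev_price p M = p * measure M {p..}"

definition rev_mixed :: "real measure \<Rightarrow> real measure \<Rightarrow> real" where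
  "rev_mixed A M = (\<integral>p. rev_price p M \<partial>A)"

definition opt_rev :: "real measure \<Rightarrow> real" where
  "opt_rev M = (SUP p\<in>{0..}. rev_price p M)"

definition ratio :: "real \<Rightarrow> real \<Rightarrow> ereal" where
  "ratio a b = (if b = 0 then \<infinity> else ereal (a / b))"

definition price_dist :: "real measure \<Rightarrow> bool" where
  "price_dist A \<longleftrightarrow> nonneg_dist A"

definition APX :: "real \<Rightarrow> real \<Rightarrow> ereal" where
  "APX \<mu> \<sigma> = (INF A\<in>{A. price_dist A}. SUP M\<in>Fclass \<mu> \<sigma>. ratio (opt_rev M) (rev_mixed A M))"

definition dist_of_cdf :: "(real \<Rightarrow> real) \<Rightarrow> real measure" where
  "dist_of_cdf G = (THE M. nonneg_dist M \<and> (\<forall>z\<ge>0. cdf M z = G z))"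

definition mixture :: "real \<Rightarrow> real \<Rightarrow> 'b measure \<Rightarrow> (real \<Rightarrow> 'b \<Rightarrow> real) \<Rightarrow> bool" where
  "mixture \<mu> \<sigma> \<Theta> F \<longleftrightarrow> prob_space \<Theta>
     \<and> (\<lambda>(x, \<theta>). F x \<theta>) \<in> borel_measurable (restrict_space borel {0..} \<Otimes>\<^sub>M \<Theta>)
     \<and> (\<forall>\<theta>\<in>space \<Theta>. \<exists>M\<in>Fclass \<mu> \<sigma>. \<forall>x\<ge>0. F x \<theta> = cdf M x)"

definition posterior :: "'b measure \<Rightarrow> (real \<Rightarrow> 'b \<Rightarrow> real) \<Rightarrow> real measure" where
  "posterior \<Theta> F = dist_of_cdf (\<lambda>z. \<integral>\<theta>. F z \<theta> \<partial>\<Theta>)"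

end

theory Submission
  imports Defs
begin
lemma fclass_rd: "M \<in> Fclass \<mu> \<sigma> \<Longrightarrow> real_distribution M"
  by (simp add: Fclass_def nonneg_dist_def)

lemma fclass_rev_le:
  assumes "M \<in> Fclass \<mu> \<sigma>" "p \<ge> 0"
  shows "rev_price p M \<le> \<mu>" "0 \<le> rev_price p M"
proof -
  interpret real_distribution M using fclass_rd[OF assms(1)] .
  have int: "integrable M (\<lambda>x. x)" and mu: "(\<integral>x. x \<partial>M) = \<mu>" and ae: "AE x in M. 0 \<le> x"
    using assms(1) by (auto simp: Fclass_def nonneg_dist_def)
  show "0 \<le> rev_price p M" using assms(2) by (simp add: rev_price_def)
  show "rev_price p M \<le> \<mu>"
  proof (cases "p = 0")
    case True
    have "0 \<le> \<mu>" using integral_nonneg_AE[OF ae] mu by simp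
    then show ?thesis using True by (simp add: rev_price_def)
  next
    case False
    then have pp: "p > 0" using assms(2) by simp
    have "measure M {x\<in>space M. x \<ge> p} \<le> (\<integral>x. x \<partial>M) / p"
      by (rule integral_Markov_inequality_measure[OF int _ ae pp, of "{}"]) simp
    then have "measure M {p..} \<le> \<mu> / p" using mu by (simp add: atLeast_def)
    then show ?thesis using pp by (simp add: rev_price_def field_simps)
  qed
qed

lemma opt_props:
  assumes "\<And>p. p \<ge> 0 \<Longrightarrow> rev_price p M \<le> B" "\<And>p. p \<ge> 0 \<Longrightarrow> 0 \<le> rev_price p M"
  shows "\<And>p. p \<ge> 0 \<Longrightarrow> rev_price p M \<le> opt_rev M" "0 \<le> opt_rev M" "opt_rev M \<le> B"
proof -
  have bdd: "bdd_above ((\<lambda>p. rev_price p M) ` {0..})"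
    using assms(1) by (auto intro!: bdd_aboveI2)
  show le: "\<And>p. p \<ge> 0 \<Longrightarrow> rev_price p M \<le> opt_rev M"
    unfolding opt_rev_def by (rule cSUP_upper) (use bdd in auto)
  show "0 \<le> opt_rev M" using le[of 0] assms(2)[of 0] by simp
  show "opt_rev M \<le> B" unfolding opt_rev_def by (rule cSUP_least) (use assms in auto)
qed

lemma dist_of_cdf_eq:
  assumes "nonneg_dist M" "\<And>z. z \<ge> 0 \<Longrightarrow> cdf M z = G z"
  shows "dist_of_cdf G = M"
  unfolding dist_of_cdf_def
proof (rule the_equality)
  show "nonneg_dist M \<and> (\<forall>z\<ge>0. cdf M z = G z)" using assms by auto
next
  have neg: "cdf M' z = 0" if "nonneg_dist M'" "z < 0" for M' z
  proof -
    interpret real_distribution M' using that by (simp add: nonneg_dist_def)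
    have "AE x in M'. x \<notin> {..z}" using that by (auto simp: nonneg_dist_def elim!: AE_mp)
    then have "emeasure M' {..z} = 0" by (intro AE_iff_measurable[THEN iffD1]) auto
    then show ?thesis by (simp add: cdf_def measure_def)
  qed
  fix M' assume M': "nonneg_dist M' \<and> (\<forall>z\<ge>0. cdf M' z = G z)"
  have "cdf M' = cdf M"
  proof
    fix z show "cdf M' z = cdf M z"
      using M' assms neg[of M' z] neg[of M z] by (cases "z < 0") auto
  qed
  then show "M' = M" using M' assms(1) by (intro cdf_unique) (auto simp: nonneg_dist_def)
qed

theorem lemma4:
  fixes \<mu> \<sigma> :: real and \<Theta> :: "'b measure" and F :: "real \<Rightarrow> 'b \<Rightarrow> real"
  assumes "\<mu> > 0" and "\<sigma> \<ge> 0" and "mixture \<mu> \<sigma> \<Theta> F"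
  shows "ereal ((\<integral>\<theta>. opt_rev (dist_of_cdf (\<lambda>z. F z \<theta>)) \<partial>\<Theta>) / opt_rev (posterior \<Theta> F))
           \<le> APX \<mu> \<sigma>"
proof -
  interpret T: prob_space \<Theta> using assms(3) by (simp add: mixture_def)
  have Fmeas: "(\<lambda>(x, \<theta>). F x \<theta>) \<in> borel_measurable (restrict_space borel {0..} \<Otimes>\<^sub>M \<Theta>)"
    using assms(3) by (simp add: mixture_def)
  define K where "K \<theta> = dist_of_cdf (\<lambda>z. F z \<theta>)" for \<theta>
  have K: "K \<theta> \<in> Fclass \<mu> \<sigma> \<and> (\<forall>x\<ge>0. cdf (K \<theta>) x = F x \<theta>)" if th: "\<theta> \<in> space \<Theta>" for \<theta>
  proof -
    obtain M where M: "M \<in> Fclass \<mu> \<sigma>" "\<forall>x\<ge>0. F x \<theta> = cdf M x"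
      using assms(3) th unfolding mixture_def by blast
    have "K \<theta> = M" unfolding K_def
    proof (rule dist_of_cdf_eq)
      show "nonneg_dist M" using M(1) unfolding Fclass_def by blast
      show "cdf M z = F z \<theta>" if "z \<ge> 0" for z using M(2) that by simp
    qed
    then show ?thesis using M by auto
  qed
  have Frd: "real_distribution (K \<theta>)" if "\<theta> \<in> space \<Theta>" for \<theta>
    using K[OF that] fclass_rd by blast
  have Fsec: "(\<lambda>\<theta>. F a \<theta>) \<in> borel_measurable \<Theta>" if "a \<ge> 0" for a
  proof -
    have "(\<lambda>\<theta>. (a, \<theta>)) \<in> \<Theta> \<rightarrow>\<^sub>M restrict_space borel {0..} \<Otimes>\<^sub>M \<Theta>"
    proof (rule measurable_Pair)
      show "(\<lambda>\<theta>. a) \<in> \<Theta> \<rightarrow>\<^sub>M restrict_space borel {0..}"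
        by (rule measurable_const) (use that in \<open>simp add: space_restrict_space\<close>)
    qed simp
    from measurable_compose[OF this Fmeas] show ?thesis by simp
  qed
  have Kmeas: "K \<in> \<Theta> \<rightarrow>\<^sub>M prob_algebra borel"
  proof (rule measurable_prob_algebra_generated[where \<Omega>=UNIV and G="range atMost"])
    have "sets (borel::real measure) = sets (sigma UNIV (range atMost))"
      by (rule arg_cong[where f=sets, OF borel_eq_atMost])
    also have "\<dots> = sigma_sets UNIV (range atMost)" by (rule sets_measure_of) simp
    finally show "sets borel = sigma_sets UNIV (range (atMost::real\<Rightarrow>_))" .
    show "Int_stable (range (atMost :: real \<Rightarrow> _))"
      unfolding Int_stable_def by (auto intro: rangeI)
    show "range atMost \<subseteq> Pow (UNIV :: real set)" by simp
    show "prob_space (K a)" if "a \<in> space \<Theta>" for a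
      using Frd[OF that] by (simp add: real_distribution_def)
    show "sets (K a) = sets borel" if "a \<in> space \<Theta>" for a
      using Frd[OF that] by (simp add: real_distribution_def real_distribution_axioms_def)
    fix X :: "real set" assume "X \<in> range atMost"
    then obtain a where X: "X = {..a}" by auto
    show "(\<lambda>\<theta>. emeasure (K \<theta>) X) \<in> borel_measurable \<Theta>"
    proof (cases "a \<ge> 0")
      case True
      have "(\<lambda>\<theta>. ennreal (F a \<theta>)) \<in> borel_measurable \<Theta>" using Fsec[OF True] by simp
      then show ?thesis
      proof (rule measurable_cong[THEN iffD1, rotated])
        fix \<theta> assume th: "\<theta> \<in> space \<Theta>"
        interpret real_distribution "K \<theta>" using Frd[OF th] .
        show "ennreal (F a \<theta>) = emeasure (K \<theta>) X"
          using K[OF th] True by (simp add: X emeasure_eq_measure cdf_def)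
      qed
    next
      case False
      show ?thesis
      proof (rule measurable_cong[THEN iffD1, rotated])
        show "(\<lambda>\<theta>. 0::ennreal) \<in> borel_measurable \<Theta>" by simp
        fix \<theta> assume th: "\<theta> \<in> space \<Theta>"
        have nn: "nonneg_dist (K \<theta>)" using K[OF th] by (simp add: Fclass_def)
        interpret real_distribution "K \<theta>" using Frd[OF th] .
        have "AE x in K \<theta>. 0 \<le> x" using nn by (simp add: nonneg_dist_def)
        then have "AE x in K \<theta>. x \<notin> {..a}" by (rule eventually_mono) (use False in auto)
        then show "0 = emeasure (K \<theta>) X" unfolding X
          by (subst AE_iff_measurable[THEN iffD1]) auto
      qed
    qed
  qed
  have Ksub: "K \<in> \<Theta> \<rightarrow>\<^sub>M subprob_algebra borel"
    using Kmeas by (simp add: measurable_restrict_space2_iff prob_algebra_def)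
  define N where "N = \<Theta> \<bind> K"
  have Kfc: "K \<theta> \<in> Fclass \<mu> \<sigma>" if "\<theta> \<in> space \<Theta>" for \<theta> using K[OF that] by blast
  have Nprob: "prob_space N" unfolding N_def
    by (rule prob_space_bind'[OF _ Kmeas]) (simp add: space_prob_algebra T.prob_space_axioms)
  have Nsets: "sets N = sets borel" unfolding N_def
    by (rule sets_bind'[OF _ Kmeas]) (simp add: space_prob_algebra T.prob_space_axioms)
  have Nrd: "real_distribution N"
    using Nprob Nsets by (simp add: real_distribution_def real_distribution_axioms_def)
  have Nnn: "nonneg_dist N"
  proof -
    have "AE \<theta> in \<Theta>. AE y in K \<theta>. 0 \<le> y"
    proof (rule AE_I2)
      fix \<theta> assume "\<theta> \<in> space \<Theta>"
      then show "AE y in K \<theta>. 0 \<le> y" using Kfc by (simp add: Fclass_def nonneg_dist_def)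
    qed
    then have "AE y in N. 0 \<le> y" unfolding N_def
      by (subst AE_bind[OF Ksub]) simp_all
    then show ?thesis using Nrd by (simp add: nonneg_dist_def)
  qed
  have Nmeas: "measure N X = (\<integral>\<theta>. measure (K \<theta>) X \<partial>\<Theta>)" if "X \<in> sets borel" for X
    unfolding N_def by (rule T.measure_bind[OF Ksub that])
  have Npost: "posterior \<Theta> F = N" unfolding posterior_def
  proof (rule dist_of_cdf_eq[OF Nnn])
    fix z :: real assume z: "z \<ge> 0"
    have "cdf N z = (\<integral>\<theta>. measure (K \<theta>) {..z} \<partial>\<Theta>)" by (simp add: cdf_def Nmeas)
    also have "\<dots> = (\<integral>\<theta>. F z \<theta> \<partial>\<Theta>)"
    proof (rule Bochner_Integration.integral_cong[OF refl])
      fix \<theta> assume "\<theta> \<in> space \<Theta>"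
      then show "measure (K \<theta>) {..z} = F z \<theta>" using K z by (simp add: cdf_def)
    qed
    finally show "cdf N z = (\<integral>\<theta>. F z \<theta> \<partial>\<Theta>)" .
  qed
  have Krev: "rev_price p (K \<theta>) \<le> \<mu>" "0 \<le> rev_price p (K \<theta>)" if "\<theta> \<in> space \<Theta>" "p \<ge> 0" for p \<theta>
    using fclass_rev_le[OF Kfc[OF that(1)] that(2)] by auto
  have Kopt: "rev_price p (K \<theta>) \<le> opt_rev (K \<theta>)" "0 \<le> opt_rev (K \<theta>)" "opt_rev (K \<theta>) \<le> \<mu>"
    if "\<theta> \<in> space \<Theta>" "p \<ge> 0" for p \<theta>
    using opt_props[of "K \<theta>" \<mu>, OF Krev(1)[OF that(1)] Krev(2)[OF that(1)]] that by auto
  have mmeas: "(\<lambda>x. measure (K (snd x)) {fst x..}) \<in> borel_measurable (borel \<Otimes>\<^sub>M \<Theta>)"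
  proof -
    have eq: "(SIGMA x:space ((borel::real measure) \<Otimes>\<^sub>M \<Theta>). {fst x..}) = {y \<in> space ((borel \<Otimes>\<^sub>M \<Theta>) \<Otimes>\<^sub>M borel). fst (fst y) \<le> snd y}"
      by (auto simp: space_pair_measure)
    have "{y \<in> space (((borel::real measure) \<Otimes>\<^sub>M \<Theta>) \<Otimes>\<^sub>M borel). fst (fst y) \<le> (snd y::real)} \<in> sets ((borel \<Otimes>\<^sub>M \<Theta>) \<Otimes>\<^sub>M borel)"
      by measurable
    then have S: "(SIGMA x:space ((borel::real measure) \<Otimes>\<^sub>M \<Theta>). {fst x..}) \<in> sets ((borel \<Otimes>\<^sub>M \<Theta>) \<Otimes>\<^sub>M borel)"
      by (simp only: eq)
    have L: "(\<lambda>x. K (snd x)) \<in> (borel::real measure) \<Otimes>\<^sub>M \<Theta> \<rightarrow>\<^sub>M subprob_algebra borel"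
      by (rule measurable_compose[OF measurable_snd Ksub])
    show ?thesis by (rule measure_measurable_subprob_algebra2[OF S L])
  qed
  define f where "f p \<theta> = max 0 p * measure (K \<theta>) {p..}" for p :: real and \<theta>
  have fmeas: "case_prod f \<in> borel_measurable (borel \<Otimes>\<^sub>M \<Theta>)"
  proof -
    have "(\<lambda>x. max 0 (fst x) * measure (K (snd x)) {fst x..}) \<in> borel_measurable (borel \<Otimes>\<^sub>M \<Theta>)"
      using mmeas by measurable
    moreover have "case_prod f = (\<lambda>x. max 0 (fst x) * measure (K (snd x)) {fst x..})"
      by (auto simp: f_def fun_eq_iff)
    ultimately show ?thesis by simp
  qed
  have fbound: "0 \<le> f p \<theta> \<and> f p \<theta> \<le> \<mu>" if "\<theta> \<in> space \<Theta>" for p \<theta>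
    using Krev[OF that, of "max 0 p"] by (simp add: f_def rev_price_def)
  have fsec1: "(\<lambda>\<theta>. f p \<theta>) \<in> borel_measurable \<Theta>" for p
  proof -
    have "(\<lambda>\<theta>. (p, \<theta>)) \<in> \<Theta> \<rightarrow>\<^sub>M borel \<Otimes>\<^sub>M \<Theta>" by measurable
    from measurable_compose[OF this fmeas] show ?thesis by simp
  qed
  have msec2: "(\<lambda>p. measure (K \<theta>) {p..}) \<in> borel_measurable borel" if "\<theta> \<in> space \<Theta>" for \<theta>
  proof -
    have "(\<lambda>p. (p, \<theta>)) \<in> borel \<rightarrow>\<^sub>M borel \<Otimes>\<^sub>M \<Theta>" using that by measurable
    from measurable_compose[OF this mmeas] show ?thesis by simp
  qed
  have fint1: "integrable \<Theta> (\<lambda>\<theta>. f p \<theta>)" for p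
    by (rule T.integrable_const_bound[where B=\<mu>]) (use fbound fsec1 in auto)
  have Nrev: "rev_price (max 0 p) N = (\<integral>\<theta>. f p \<theta> \<partial>\<Theta>)" for p
    by (cases "p \<ge> 0") (simp_all add: f_def rev_price_def Nmeas)
  have Nrevb: "rev_price p N \<le> \<mu>" "0 \<le> rev_price p N" if "p \<ge> 0" for p
  proof -
    have "(\<integral>\<theta>. f p \<theta> \<partial>\<Theta>) \<le> (\<integral>\<theta>. \<mu> \<partial>\<Theta>)"
      by (rule integral_mono[OF fint1]) (use fbound in auto)
    then show "rev_price p N \<le> \<mu>" using Nrev[of p] that by (simp add: T.prob_space)
    show "0 \<le> rev_price p N" using that by (simp add: rev_price_def)
  qed
  note Nopt = opt_props[of N \<mu>, OF Nrevb(1) Nrevb(2)]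
  show ?thesis
  unfolding APX_def Npost
  proof (rule INF_greatest)
    fix A assume "A \<in> {A. price_dist A}"
    then have Ad: "nonneg_dist A" by (simp add: price_dist_def)
    then interpret A: real_distribution A by (simp add: nonneg_dist_def)
    have Aae: "AE p in A. 0 \<le> p" using Ad by (simp add: nonneg_dist_def)
    interpret P: pair_prob_space A \<Theta> by unfold_locales
    have fmeasP: "case_prod f \<in> borel_measurable (A \<Otimes>\<^sub>M \<Theta>)"
      using fmeas by (simp cong: measurable_cong_sets)
    have fint: "integrable (A \<Otimes>\<^sub>M \<Theta>) (case_prod f)"
    proof (rule P.integrable_const_bound[where B=\<mu>])
      show "AE x in A \<Otimes>\<^sub>M \<Theta>. norm (case_prod f x) \<le> \<mu>"
        by (rule AE_I2) (use fbound in \<open>auto simp: space_pair_measure\<close>)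
    qed (rule fmeasP)
    define R where "R \<theta> = rev_mixed A (K \<theta>)" for \<theta>
    have R_eq: "R \<theta> = (\<integral>p. f p \<theta> \<partial>A)" if th: "\<theta> \<in> space \<Theta>" for \<theta>
      unfolding R_def rev_mixed_def
    proof (rule integral_cong_AE)
      show "(\<lambda>p. rev_price p (K \<theta>)) \<in> borel_measurable A"
        using msec2[OF th] by (simp add: rev_price_def cong: measurable_cong_sets)
      show "(\<lambda>p. f p \<theta>) \<in> borel_measurable A"
        using msec2[OF th] by (simp add: f_def cong: measurable_cong_sets)
      show "AE p in A. rev_price p (K \<theta>) = f p \<theta>"
        using Aae by (rule eventually_mono) (simp add: rev_price_def f_def)
    qed
    have "integrable \<Theta> R \<longleftrightarrow> integrable \<Theta> (\<lambda>\<theta>. \<integral>p. f p \<theta> \<partial>A)"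
      by (rule Bochner_Integration.integrable_cong) (simp_all add: R_eq)
    then have Rint: "integrable \<Theta> R" using P.integrable_snd[OF fint] by simp
    have "(\<integral>\<theta>. R \<theta> \<partial>\<Theta>) = (\<integral>\<theta>. (\<integral>p. f p \<theta> \<partial>A) \<partial>\<Theta>)"
      by (rule Bochner_Integration.integral_cong) (simp_all add: R_eq)
    also have "\<dots> = (\<integral>p. (\<integral>\<theta>. f p \<theta> \<partial>\<Theta>) \<partial>A)" by (rule P.Fubini_integral[OF fint])
    also have "\<dots> \<le> (\<integral>p. opt_rev N \<partial>A)"
    proof (rule integral_mono[OF P.integrable_fst[OF fint]])
      show "integrable A (\<lambda>p. opt_rev N)" by simp
      fix p show "(\<integral>\<theta>. f p \<theta> \<partial>\<Theta>) \<le> opt_rev N"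
        using Nopt(1)[of "max 0 p"] Nrev[of p] by simp
    qed
    also have "\<dots> = opt_rev N" using A.prob_space by simp
    finally have intR: "(\<integral>\<theta>. R \<theta> \<partial>\<Theta>) \<le> opt_rev N" .
    have revA_nn: "0 \<le> rev_mixed A M" if "M \<in> Fclass \<mu> \<sigma>" for M
      unfolding rev_mixed_def
      by (rule integral_nonneg_AE) (use Aae in \<open>auto elim: eventually_mono simp: rev_price_def\<close>)
    have ratio_nn: "0 \<le> ratio (opt_rev M) (rev_mixed A M)" if "M \<in> Fclass \<mu> \<sigma>" for M
      using revA_nn[OF that] opt_props[of M \<mu>, OF fclass_rev_le[OF that]] by (simp add: ratio_def)
    define S where "S = (SUP M\<in>Fclass \<mu> \<sigma>. ratio (opt_rev M) (rev_mixed A M))"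
    obtain \<theta>0 where th0: "\<theta>0 \<in> space \<Theta>" using T.not_empty by blast
    have "0 \<le> S" unfolding S_def
      by (rule order.trans[OF ratio_nn[OF Kfc[OF th0]] SUP_upper[OF Kfc[OF th0], of "\<lambda>M. ratio (opt_rev M) (rev_mixed A M)"]])
    show "ereal ((\<integral>\<theta>. opt_rev (dist_of_cdf (\<lambda>z. F z \<theta>)) \<partial>\<Theta>) / opt_rev N) \<le> S"
    proof (cases "S = \<infinity>")
      case True then show ?thesis by simp
    next
      case False
      with \<open>0 \<le> S\<close> obtain s where s: "S = ereal s" "0 \<le> s" by (cases S) auto
      have optle: "opt_rev (K \<theta>) \<le> s * R \<theta>" if th: "\<theta> \<in> space \<Theta>" for \<theta>
      proof -
        have le: "ratio (opt_rev (K \<theta>)) (R \<theta>) \<le> ereal s"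
          unfolding R_def s(1)[symmetric] S_def by (rule SUP_upper[OF Kfc[OF th]])
        have R0: "R \<theta> \<noteq> 0" using le by (auto simp: ratio_def)
        have "R \<theta> \<ge> 0" unfolding R_def by (rule revA_nn[OF Kfc[OF th]])
        with R0 have Rp: "R \<theta> > 0" by simp
        from le R0 have "opt_rev (K \<theta>) / R \<theta> \<le> s" by (simp add: ratio_def)
        with Rp show ?thesis by (simp add: divide_le_eq mult.commute)
      qed
      define I where "I = (\<integral>\<theta>. opt_rev (K \<theta>) \<partial>\<Theta>)"
      have Ile: "I \<le> s * opt_rev N"
      proof (cases "integrable \<Theta> (\<lambda>\<theta>. opt_rev (K \<theta>))")
        case True
        have "I \<le> (\<integral>\<theta>. s * R \<theta> \<partial>\<Theta>)" unfolding I_def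
          by (rule integral_mono[OF True]) (use Rint optle in auto)
        also have "\<dots> = s * (\<integral>\<theta>. R \<theta> \<partial>\<Theta>)" by simp
        also have "\<dots> \<le> s * opt_rev N" using intR s(2) by (rule mult_left_mono)
        finally show ?thesis .
      next
        case False
        then have "I = 0" unfolding I_def by (rule not_integrable_integral_eq)
        then show ?thesis using s(2) Nopt(2) by simp
      qed
      have "I / opt_rev N \<le> s"
      proof (cases "opt_rev N = 0")
        case True then show ?thesis using s(2) by simp
      next
        case False
        then have "opt_rev N > 0" using Nopt(2) by simp
        then show ?thesis using Ile by (simp add: divide_le_eq mult.commute)
      qed
      then show ?thesis using s(1) by (simp add: I_def K_def)
    qed
  qed
qed

end
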